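(* Let $(x_n)$ be a nonincreasing interval-filling sequence of positive reals with cardinal function $f$, and suppose there are indices $k<m$ such that $x_m<r_m$ and $x_k+x_m<r_k$. Then there exists $y\in\mathcal{A}((x_n))$ with $f(y)\ge4$ (with $\omega,\mathfrak{c}$ counting as $\ge4$).
   Context: For a summable sequence $\mathbf{x}=(x_n)$ of positive reals, $\mathcal{A}(\mathbf{x})=\{\sum_{n\in A}x_n: A\subseteq\mathbb{N}\}$ is its achievement set and its cardinal function $f$ assigns to $x\in\mathcal{A}(\mathbf{x})$ the cardinality (a positive integer, $\omega$, or $\mathfrak{c}$) of $\{(\varepsilon_n)\in\{0,1\}^{\mathbb{N}}:\sum\varepsilon_nx_n=x\}$. The sequence is interval-filling if $\mathcal{A}(\mathbf{x})$ is an interval. The tail sums are $r_n=\sum_{k=n+1}^\infty x_k$. *)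

theory Defs
  imports "HOL-Analysis.Analysis"
begin

text \<open>Subset sum of a sequence over an index set A (a 0/1 sequence is identified
  with the set of indices where it equals 1).\<close>
definition subset_sum :: "(nat \<Rightarrow> real) \<Rightarrow> nat set \<Rightarrow> real" where
  "subset_sum x A = (\<Sum>n. if n \<in> A then x n else 0)"

definition achievement_set :: "(nat \<Rightarrow> real) \<Rightarrow> real set" where
  "achievement_set x = {subset_sum x A | A. True}"

text \<open>The set whose cardinality is the cardinal function value f(y).\<close>
definition representations :: "(nat \<Rightarrow> real) \<Rightarrow> real \<Rightarrow> nat set set" where
  "representations x y = {A. subset_sum x A = y}"

definition interval_filling :: "(nat \<Rightarrow> real) \<Rightarrow> bool" where
  "interval_filling x \<longleftrightarrow> is_interval (achievement_set x)"

definition tail_sum :: "(nat \<Rightarrow> real) \<Rightarrow> nat \<Rightarrow> real" where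
  "tail_sum x n = (\<Sum>k. x (n + 1 + k))"

end

theory Submission imports Defs begin

lemma ss_summ:
  assumes "\<And>n. 0 < x n" "summable x"
  shows "summable (\<lambda>p. if p \<in> A then x p else (0::real))"
  by (rule summable_comparison_test[OF _ assms(2)]) (auto simp: less_imp_le[OF assms(1)])

lemma ss_union:
  assumes "\<And>n. 0 < x n" "summable x" "A \<inter> B = {}"
  shows "subset_sum x (A \<union> B) = subset_sum x A + subset_sum x B"
proof -
  have "(\<lambda>p. if p \<in> A \<union> B then x p else 0) = (\<lambda>p. (if p \<in> A then x p else 0) + (if p \<in> B then x p else 0))"
    using assms(3) by (auto simp: fun_eq_iff)
  then show ?thesis unfolding subset_sum_def
    using suminf_add[OF ss_summ[OF assms(1,2), of A] ss_summ[OF assms(1,2), of B]] by simp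
qed

lemma ss_finite:
  assumes "finite A"
  shows "subset_sum x A = sum x A"
  unfolding subset_sum_def by (subst suminf_finite[OF assms]) auto

lemma ss_ge:
  assumes "\<And>n. 0 < x n" "summable x" "i \<in> A"
  shows "x i \<le> subset_sum x A"
proof -
  have "sum (\<lambda>p. if p \<in> A then x p else 0) {i} \<le> subset_sum x A"
    unfolding subset_sum_def
    by (rule sum_le_suminf[OF ss_summ[OF assms(1,2)]]) (auto simp: less_imp_le[OF assms(1)])
  then show ?thesis using assms(3) by simp
qed

lemma ss_nonneg:
  assumes "\<And>n. 0 < x n" "summable x"
  shows "0 \<le> subset_sum x A"
  unfolding subset_sum_def
  by (rule suminf_nonneg[OF ss_summ[OF assms]]) (auto simp: less_imp_le[OF assms(1)])

lemma ss_tail_le: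
  assumes "\<And>n. 0 < x n" "summable x" "A \<subseteq> {j<..}"
  shows "subset_sum x A \<le> tail_sum x j"
proof -
  let ?g = "\<lambda>p. if p \<in> A then x p else 0"
  have "subset_sum x A = (\<Sum>p. ?g (p + (j+1))) + (\<Sum>i<j+1. ?g i)"
    unfolding subset_sum_def by (rule suminf_split_initial_segment[OF ss_summ[OF assms(1,2)]])
  also have "(\<Sum>i<j+1. ?g i) = 0" using assms(3) by (intro sum.neutral) auto
  also have "(\<Sum>p. ?g (p + (j+1))) \<le> (\<Sum>p. x (p + (j+1)))"
    apply (rule suminf_le)
      apply (simp add: less_imp_le[OF assms(1)])
     apply (rule summable_ignore_initial_segment[OF ss_summ[OF assms(1,2)]])
    apply (rule summable_ignore_initial_segment[OF assms(2)])
    done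
  also have "\<dots> = tail_sum x j" unfolding tail_sum_def by (simp add: add.commute)
  finally show ?thesis by simp
qed

lemma tail_step:
  assumes "summable x"
  shows "tail_sum x p = x (p+1) + tail_sum x (p+1)"
proof -
  have s: "summable (\<lambda>k. x (p+1+k))" using summable_ignore_initial_segment[OF assms, of "p+1"]
    by (simp add: add.commute)
  show ?thesis unfolding tail_sum_def using suminf_split_head[OF s] by (simp add: add_ac)
qed

lemma tail_lim:
  assumes "summable x"
  shows "(\<lambda>p. tail_sum x p) \<longlonglongrightarrow> 0"
proof -
  have e: "tail_sum x p = suminf x - (\<Sum>i<Suc p. x i)" for p
    using suminf_split_initial_segment[OF assms, of "Suc p"] unfolding tail_sum_def
    by (simp add: add.commute)
  have "(\<lambda>p. suminf x - (\<Sum>i<Suc p. x i)) \<longlonglongrightarrow> suminf x - suminf x"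
    by (intro tendsto_diff tendsto_const LIMSEQ_Suc summable_LIMSEQ assms)
  then show ?thesis by (simp add: e)
qed

lemma kakeya:
  assumes pos: "\<And>n. 0 < x n" and summ: "summable x" and noninc: "decseq x"
    and fill: "interval_filling x"
  shows "x i \<le> tail_sum x i"
proof (rule ccontr)
  assume "\<not> x i \<le> tail_sum x i"
  hence lt: "tail_sum x i < x i" by simp
  define v where "v = (tail_sum x i + x i) / 2"
  have iv: "is_interval (achievement_set x)" using fill unfolding interval_filling_def .
  have a0: "0 \<in> achievement_set x" unfolding achievement_set_def
    using ss_finite[of "{}" x] by auto
  have a1: "subset_sum x UNIV \<in> achievement_set x" unfolding achievement_set_def by auto
  have "x i \<le> subset_sum x UNIV" by (rule ss_ge[OF pos summ]) simp
  moreover have "0 \<le> tail_sum x i"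
    using ss_tail_le[OF pos summ, of "{}" i] ss_finite[of "{}" x] ss_nonneg[OF pos summ] by simp
  ultimately have v1: "0 \<le> v" "v \<le> subset_sum x UNIV" using lt unfolding v_def by auto
  have "\<forall>a\<in>achievement_set x. \<forall>b\<in>achievement_set x. \<forall>z. a \<le> z \<and> z \<le> b \<longrightarrow> z \<in> achievement_set x"
    using iv by (simp only: is_interval_1)
  hence "v \<in> achievement_set x" using a0 a1 v1 by blast
  then obtain B where B: "subset_sum x B = v" unfolding achievement_set_def by auto
  show False
  proof (cases "\<exists>p\<in>B. p \<le> i")
    case True
    then obtain p where p: "p \<in> B" "p \<le> i" by auto
    have "x i \<le> x p" using noninc p(2) by (simp add: decseq_def)
    also have "\<dots> \<le> subset_sum x B" by (rule ss_ge[OF pos summ p(1)])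
    finally show False using B lt unfolding v_def by simp
  next
    case False
    hence "B \<subseteq> {i<..}" by auto
    from ss_tail_le[OF pos summ this] show False using B lt unfolding v_def by simp
  qed
qed

primrec gp :: "(nat \<Rightarrow> real) \<Rightarrow> nat \<Rightarrow> real \<Rightarrow> nat \<Rightarrow> real" where
  "gp x n t 0 = 0"
| "gp x n t (Suc i) = (if gp x n t i + x (n+1+i) \<le> t then gp x n t i + x (n+1+i) else gp x n t i)"

lemma greedy:
  assumes pos: "\<And>n. 0 < x n" and summ: "summable x"
    and kak: "\<And>i. x i \<le> tail_sum x i"
    and t0: "0 \<le> t" and t1: "t \<le> tail_sum x n"
  shows "\<exists>A. A \<subseteq> {n<..} \<and> subset_sum x A = t"
proof -
  define G where "G = {p. \<exists>i. p = n+1+i \<and> gp x n t i + x (n+1+i) \<le> t}"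
  define g where "g = (\<lambda>p. if p \<in> G then x p else 0)"
  have inv: "0 \<le> t - gp x n t i \<and> t - gp x n t i \<le> tail_sum x (n+i)" for i
  proof (induction i)
    case 0 then show ?case using t0 t1 by simp
  next
    case (Suc i)
    have ts: "tail_sum x (n+i) = x (n+i+1) + tail_sum x (n+i+1)" by (rule tail_step[OF summ])
    have k: "x (n+i+1) \<le> tail_sum x (n+i+1)" by (rule kak)
    have e: "n + Suc i = n+i+1" "n+1+i = n+i+1" by simp_all
    show ?case
    proof (cases "gp x n t i + x (n+1+i) \<le> t")
      case True
      then show ?thesis using Suc ts k by (simp only: e gp.simps if_True) linarith
    next
      case False
      then show ?thesis using Suc ts k by (simp only: e gp.simps if_False simp_thms)
    qed
  qed
  have mem: "n+1+i \<in> G \<longleftrightarrow> gp x n t i + x (n+1+i) \<le> t" for i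
    by (auto simp: G_def)
  have ps: "(\<Sum>p<i + (n+1). g p) = gp x n t i" for i
  proof (induction i)
    case 0
    have "(\<Sum>p<n+1. g p) = 0" by (intro sum.neutral) (auto simp: g_def G_def)
    then show ?case by simp
  next
    case (Suc i)
    have "(\<Sum>p<Suc i + (n+1). g p) = (\<Sum>p<i + (n+1). g p) + g (n+1+i)"
      by (simp add: add_ac)
    also have "\<dots> = gp x n t (Suc i)" using Suc mem[of i] by (simp add: g_def)
    finally show ?case .
  qed
  have tl: "(\<lambda>i. tail_sum x (i + n)) \<longlonglongrightarrow> 0"
    by (rule LIMSEQ_ignore_initial_segment[OF tail_lim[OF summ]])
  have l1: "(\<lambda>i. t - tail_sum x (i + n)) \<longlonglongrightarrow> t"
    using tendsto_diff[OF tendsto_const[of t] tl] by simp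
  have "(\<lambda>i. gp x n t i) \<longlonglongrightarrow> t"
  proof (rule tendsto_sandwich[OF _ _ l1 tendsto_const])
    have a: "t - tail_sum x (i + n) \<le> gp x n t i" for i using inv[of i] by (simp add: add.commute)
    have b: "gp x n t i \<le> t" for i using inv[of i] by simp
    show "\<forall>\<^sub>F i in sequentially. t - tail_sum x (i + n) \<le> gp x n t i" using a by simp
    show "\<forall>\<^sub>F i in sequentially. gp x n t i \<le> t" using b by simp
  qed
  moreover have eq: "(\<lambda>i. (\<Sum>p<i + (n+1). g p)) = (\<lambda>i. gp x n t i)" using ps by (intro ext)
  ultimately have "(\<lambda>i. (\<Sum>p<i + (n+1). g p)) \<longlonglongrightarrow> t" by (simp only: eq)
  hence "(\<lambda>N. (\<Sum>p<N. g p)) \<longlonglongrightarrow> t" by (rule LIMSEQ_offset)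
  hence "g sums t" by (simp add: sums_def)
  hence "subset_sum x G = t" unfolding subset_sum_def g_def[symmetric] by (rule sums_unique[symmetric])
  moreover have "G \<subseteq> {n<..}" by (auto simp: G_def)
  ultimately show ?thesis by blast
qed

theorem theorem4p13:
  fixes x :: "nat \<Rightarrow> real" and k m :: nat
  assumes pos: "\<And>n. x n > 0"
    and summ: "summable x"
    and noninc: "decseq x"
    and fill: "interval_filling x"
    and km: "k < m"
    and h1: "x m < tail_sum x m"
    and h2: "x k + x m < tail_sum x k"
  shows "\<exists>y \<in> achievement_set x.
           infinite (representations x y) \<or> card (representations x y) \<ge> 4"
proof -
  have kak: "\<And>i. x i \<le> tail_sum x i" using kakeya[OF pos summ noninc fill] .
  define d where "d = min (tail_sum x m - x m) (tail_sum x k - x k - x m)"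
  have dpos: "0 < d" using h1 h2 unfolding d_def by simp
  have "x \<longlonglongrightarrow> 0" by (rule summable_LIMSEQ_zero[OF summ])
  hence "\<forall>\<^sub>F j in sequentially. x j < d" using dpos by (rule order_tendstoD)
  then obtain N where N: "\<And>j. j \<ge> N \<Longrightarrow> x j < d" unfolding eventually_sequentially by blast
  define j where "j = max N (m+1)"
  have mj: "m < j" and xj: "x j < d" using N[of j] unfolding j_def by auto
  obtain U where U: "U \<subseteq> {j<..}" "subset_sum x U = x j"
    using greedy[OF pos summ kak, of "x j" j] pos[of j] kak[of j] by auto
  obtain T where T: "T \<subseteq> {m<..}" "subset_sum x T = x m + x j"
    using greedy[OF pos summ kak, of "x m + x j" m] pos[of j] pos[of m] xj
    unfolding d_def by auto
  obtain V where V: "V \<subseteq> {k<..}" "subset_sum x V = x k + x m + x j"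
    using greedy[OF pos summ kak, of "x k + x m + x j" k] pos[of j] pos[of m] pos[of k] xj
    unfolding d_def by auto
  define y where "y = x k + x m + x j"
  define R1 where "R1 = {k, m, j}"
  define R2 where "R2 = {k, m} \<union> U"
  define R3 where "R3 = {k} \<union> T"
  have s1: "subset_sum x R1 = y" unfolding R1_def y_def
    using km mj by (simp add: ss_finite)
  have kmU: "k \<notin> U" "m \<notin> U" using U km mj by auto
  have s2: "subset_sum x R2 = y" unfolding R2_def y_def
    using ss_union[OF pos summ, of "{k,m}" U] U kmU km mj by (auto simp: ss_finite)
  have kT: "k \<notin> T" using T km by auto
  have s3: "subset_sum x R3 = y" unfolding R3_def y_def
    using ss_union[OF pos summ, of "{k}" T] T km mj kT by (auto simp: ss_finite)
  have s4: "subset_sum x V = y" unfolding y_def using V by simp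
  have j2: "j \<notin> R2" using U km mj unfolding R2_def by auto
  have m3: "m \<notin> R3" using T km unfolding R3_def by auto
  have kV: "k \<notin> V" using V by auto
  have i1: "j \<in> R1" "m \<in> R1" "k \<in> R1" unfolding R1_def by auto
  have i2: "m \<in> R2" "k \<in> R2" unfolding R2_def by auto
  have i3: "k \<in> R3" unfolding R3_def by auto
  have ne: "R1 \<noteq> R2" "R1 \<noteq> R3" "R2 \<noteq> R3" "R1 \<noteq> V" "R2 \<noteq> V" "R3 \<noteq> V"
    using i1 i2 i3 j2 m3 kV by metis+
  have c4: "card {R1, R2, R3, V} = 4" using ne by simp
  have sub: "{R1, R2, R3, V} \<subseteq> representations x y"
    using s1 s2 s3 s4 unfolding representations_def by auto
  have yA: "y \<in> achievement_set x" using s1 unfolding achievement_set_def by auto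
  show ?thesis
  proof (cases "finite (representations x y)")
    case True
    have "card {R1, R2, R3, V} \<le> card (representations x y)" by (rule card_mono[OF True sub])
    then show ?thesis using yA c4 by auto
  next
    case False then show ?thesis using yA by auto
  qed
qed

end
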